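(* Let $T$ be an iso-unique zero forcing tree with at least two vertices and let $\mathcal{P}$ be a minimum path cover of $T$. If a path $P\in\mathcal{P}$ consists of a single vertex $x$, then $x$ has a unique neighbor, and this neighbor is the middle vertex of a path $R\in\mathcal{P}$ with exactly three vertices (i.e., $R\cong P_3$).
   Context: Zero forcing: in a graph $G$, starting with an initial set $S\subseteq V(G)$ of active vertices, repeatedly apply the rule: if an active vertex $u$ has exactly one non-active neighbor $v$, then $v$ becomes active. $S$ is a zero forcing set if eventually all vertices become active; a minimum zero forcing set is one of minimum size. A graph is an iso-unique zero forcing graph if for every two minimum zero forcing sets $A,B$ there is an automorphism $\phi$ with $\phi(A)=B$. A path cover of a tree $T$ is a set of vertex-disjoint paths of $T$ (a single vertex counts as a path) covering all vertices of $T$; it is minimum if no path cover has fewer paths. *)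

theory Defs
  imports Main
begin

definition simple_graph :: "'a set \<Rightarrow> ('a \<Rightarrow> 'a \<Rightarrow> bool) \<Rightarrow> bool" where
  "simple_graph V E \<longleftrightarrow> finite V \<and> (\<forall>u v. E u v \<longrightarrow> u \<in> V \<and> v \<in> V)
     \<and> (\<forall>u v. E u v \<longrightarrow> E v u) \<and> (\<forall>u. \<not> E u u)"

definition is_walk :: "'a set \<Rightarrow> ('a \<Rightarrow> 'a \<Rightarrow> bool) \<Rightarrow> 'a list \<Rightarrow> bool" where
  "is_walk V E p \<longleftrightarrow> p \<noteq> [] \<and> set p \<subseteq> V \<and> (\<forall>i. Suc i < length p \<longrightarrow> E (p ! i) (p ! Suc i))"

definition is_path :: "'a set \<Rightarrow> ('a \<Rightarrow> 'a \<Rightarrow> bool) \<Rightarrow> 'a list \<Rightarrow> bool" where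
  "is_path V E p \<longleftrightarrow> is_walk V E p \<and> distinct p"

definition connected_graph :: "'a set \<Rightarrow> ('a \<Rightarrow> 'a \<Rightarrow> bool) \<Rightarrow> bool" where
  "connected_graph V E \<longleftrightarrow> (\<forall>u\<in>V. \<forall>v\<in>V. \<exists>p. is_walk V E p \<and> hd p = u \<and> last p = v)"

definition has_cycle :: "'a set \<Rightarrow> ('a \<Rightarrow> 'a \<Rightarrow> bool) \<Rightarrow> bool" where
  "has_cycle V E \<longleftrightarrow> (\<exists>c. is_path V E c \<and> length c \<ge> 3 \<and> E (last c) (hd c))"

definition is_tree :: "'a set \<Rightarrow> ('a \<Rightarrow> 'a \<Rightarrow> bool) \<Rightarrow> bool" where
  "is_tree V E \<longleftrightarrow> simple_graph V E \<and> V \<noteq> {} \<and> connected_graph V E \<and> \<not> has_cycle V E"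

text \<open>Vertices eventually active when starting from S (closure under the colour change rule).\<close>
inductive active :: "'a set \<Rightarrow> ('a \<Rightarrow> 'a \<Rightarrow> bool) \<Rightarrow> 'a set \<Rightarrow> 'a \<Rightarrow> bool"
  for V E S where
  init: "v \<in> S \<Longrightarrow> active V E S v"
| force: "\<lbrakk> u \<in> V; active V E S u; v \<in> V; E u v;
           \<forall>w\<in>V. E u w \<and> w \<noteq> v \<longrightarrow> active V E S w \<rbrakk> \<Longrightarrow> active V E S v"

definition zero_forcing_set :: "'a set \<Rightarrow> ('a \<Rightarrow> 'a \<Rightarrow> bool) \<Rightarrow> 'a set \<Rightarrow> bool" where
  "zero_forcing_set V E S \<longleftrightarrow> S \<subseteq> V \<and> (\<forall>v\<in>V. active V E S v)"

definition min_zero_forcing_set :: "'a set \<Rightarrow> ('a \<Rightarrow> 'a \<Rightarrow> bool) \<Rightarrow> 'a set \<Rightarrow> bool" where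
  "min_zero_forcing_set V E S \<longleftrightarrow> zero_forcing_set V E S \<and>
     (\<forall>S'. zero_forcing_set V E S' \<longrightarrow> card S \<le> card S')"

definition automorphism :: "'a set \<Rightarrow> ('a \<Rightarrow> 'a \<Rightarrow> bool) \<Rightarrow> ('a \<Rightarrow> 'a) \<Rightarrow> bool" where
  "automorphism V E \<phi> \<longleftrightarrow> bij_betw \<phi> V V \<and> (\<forall>u\<in>V. \<forall>v\<in>V. E u v \<longleftrightarrow> E (\<phi> u) (\<phi> v))"

definition iso_unique_zf :: "'a set \<Rightarrow> ('a \<Rightarrow> 'a \<Rightarrow> bool) \<Rightarrow> bool" where
  "iso_unique_zf V E \<longleftrightarrow> (\<forall>A B. min_zero_forcing_set V E A \<and> min_zero_forcing_set V E B
      \<longrightarrow> (\<exists>\<phi>. automorphism V E \<phi> \<and> \<phi> ` A = B))"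

definition path_cover :: "'a set \<Rightarrow> ('a \<Rightarrow> 'a \<Rightarrow> bool) \<Rightarrow> 'a list set \<Rightarrow> bool" where
  "path_cover V E \<P> \<longleftrightarrow> (\<forall>p\<in>\<P>. is_path V E p)
     \<and> (\<forall>p\<in>\<P>. \<forall>q\<in>\<P>. p \<noteq> q \<longrightarrow> set p \<inter> set q = {})
     \<and> (\<Union>p\<in>\<P>. set p) = V"

definition min_path_cover :: "'a set \<Rightarrow> ('a \<Rightarrow> 'a \<Rightarrow> bool) \<Rightarrow> 'a list set \<Rightarrow> bool" where
  "min_path_cover V E \<P> \<longleftrightarrow> path_cover V E \<P> \<and> finite \<P> \<and>
     (\<forall>\<Q>. path_cover V E \<Q> \<longrightarrow> card \<P> \<le> card \<Q>)"

end

theory Submission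
  imports Defs
begin


lemma walk_nth_V: "is_walk V E p \<Longrightarrow> i < length p \<Longrightarrow> p ! i \<in> V"
  unfolding is_walk_def by auto

lemma is_path_mono:
  assumes "is_path V' E' p" "V' \<subseteq> V" "\<And>a b. E' a b \<Longrightarrow> E a b"
  shows "is_path V E p"
  using assms unfolding is_path_def is_walk_def by blast

lemma has_cycle_mono:
  assumes "has_cycle V' E'" "V' \<subseteq> V" "\<And>a b. E' a b \<Longrightarrow> E a b"
  shows "has_cycle V E"
  using assms is_path_mono unfolding has_cycle_def by metis

lemma is_path_take:
  assumes "is_path V E p" "0 < n"
  shows "is_path V E (take n p)"
  using assms unfolding is_path_def is_walk_def
  by (auto dest: in_set_takeD)

lemma is_path_drop:
  assumes "is_path V E p" "n < length p"
  shows "is_path V E (drop n p)"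
  using assms unfolding is_path_def is_walk_def
  by (auto dest: in_set_dropD)

lemma is_path_append:
  assumes "is_path V E p" "is_path V E q" "set p \<inter> set q = {}" "E (last p) (hd q)"
  shows "is_path V E (p @ q)"
proof -
  have np: "p \<noteq> []" and nq: "q \<noteq> []" using assms unfolding is_path_def is_walk_def by auto
  have "E ((p @ q) ! i) ((p @ q) ! Suc i)" if "Suc i < length (p @ q)" for i
  proof -
    consider "Suc i < length p" | "Suc i = length p" | "length p \<le> i" by linarith
    then show ?thesis
    proof cases
      case 1 then show ?thesis using assms(1) unfolding is_path_def is_walk_def by (simp add: nth_append)
    next
      case 2
      then have "i = length p - 1" by simp
      then have "(p @ q) ! i = last p" using np by (simp add: nth_append last_conv_nth)
      moreover have "(p @ q) ! Suc i = hd q" using 2 nq by (simp add: nth_append hd_conv_nth)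
      ultimately show ?thesis using assms(4) by simp
    next
      case 3
      then have "Suc (i - length p) < length q" using that by simp
      then have "E (q ! (i - length p)) (q ! Suc (i - length p))"
        using assms(2) unfolding is_path_def is_walk_def by blast
      moreover have "Suc i - length p = Suc (i - length p)" using 3 by simp
      ultimately show ?thesis using 3 by (simp add: nth_append)
    qed
  qed
  then show ?thesis using assms unfolding is_path_def is_walk_def by auto
qed

lemma is_path_rev:
  assumes "is_path V E p" "\<And>a b. E a b \<Longrightarrow> E b a"
  shows "is_path V E (rev p)"
proof -
  have "E (rev p ! i) (rev p ! Suc i)" if "Suc i < length p" for i
  proof -
    have "E (p ! (length p - Suc (Suc i))) (p ! Suc (length p - Suc (Suc i)))"
    proof -
      have "Suc (length p - Suc (Suc i)) < length p" using that by simp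
      then show ?thesis using assms(1) unfolding is_path_def is_walk_def by blast
    qed
    moreover have "Suc (length p - Suc (Suc i)) = length p - Suc i" using that by simp
    ultimately show ?thesis using that assms(2) by (simp add: rev_nth)
  qed
  then show ?thesis using assms unfolding is_path_def is_walk_def by auto
qed

lemma cycle_from_path:
  assumes "is_path V E p" "i + 2 \<le> j" "j < length p" "E (p ! j) (p ! i)"
  shows "has_cycle V E"
proof -
  define c where "c = take (j - i + 1) (drop i p)"
  have ilt: "i < length p" using assms by linarith
  have lc: "length c = j - i + 1" using assms(2,3) unfolding c_def by simp
  have cn: "c ! m = p ! (i + m)" if "m < length c" for m
    using that lc ilt unfolding c_def by (simp add: nth_take nth_drop)
  have "is_path V E (drop i p)" by (rule is_path_drop[OF assms(1) ilt])
  then have pc: "is_path V E c" unfolding c_def by (rule is_path_take) simp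
  have cne: "c \<noteq> []" using lc by auto
  have hc: "hd c = p ! i" using cn[of 0] lc hd_conv_nth[OF cne] by simp
  have "last c = c ! (j - i)" using lc last_conv_nth[OF cne] by simp
  also have "\<dots> = p ! j" using cn[of "j - i"] lc assms(2) by simp
  finally have "last c = p ! j" .
  then have "E (last c) (hd c)" using hc assms(4) by simp
  moreover have "length c \<ge> 3" using lc assms(2) by simp
  ultimately show ?thesis unfolding has_cycle_def using pc by blast
qed

lemma path_nbr:
  assumes "\<not> has_cycle V E" "is_path V E p" "i < j" "j < length p" "E (p ! j) (p ! i)"
  shows "j = Suc i"
  using cycle_from_path[OF assms(2) _ assms(4,5)] assms(1,3) by fastforce



lemma deg2_cycle:
  assumes sg: "simple_graph V E" and W: "W \<subseteq> V" "W \<noteq> {}"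
    and deg: "\<forall>w\<in>W. \<exists>a b. a \<noteq> b \<and> a \<in> W \<and> b \<in> W \<and> E w a \<and> E w b"
  shows "has_cycle V E"
proof (rule ccontr)
  assume nc: "\<not> has_cycle V E"
  have fin: "finite W" using sg W finite_subset unfolding simple_graph_def by blast
  have irr: "\<And>u. \<not> E u u" using sg unfolding simple_graph_def by blast
  obtain w where w: "w \<in> W" using W by blast
  have P0: "is_path V E [w] \<and> set [w] \<subseteq> W" using w W unfolding is_path_def is_walk_def by auto
  have bound: "\<forall>p. is_path V E p \<and> set p \<subseteq> W \<longrightarrow> length p < card W + 1"
  proof (intro allI impI)
    fix p assume "is_path V E p \<and> set p \<subseteq> W"
    then have "distinct p" "set p \<subseteq> W" unfolding is_path_def by auto
    then have "length p \<le> card W" using fin by (metis card_mono distinct_card)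
    then show "length p < card W + 1" by simp
  qed
  obtain p where p: "is_path V E p \<and> set p \<subseteq> W"
    and pmax: "\<forall>q. is_path V E q \<and> set q \<subseteq> W \<longrightarrow> length q \<le> length p"
    using ex_has_greatest_nat[OF P0 bound] by blast
  have pne: "p \<noteq> []" using p unfolding is_path_def is_walk_def by auto
  define n where "n = length p"
  have n1: "n \<ge> 1" using pne n_def by (cases p) auto
  define e where "e = last p"
  have e_eq: "e = p ! (n - 1)" using pne unfolding e_def n_def by (simp add: last_conv_nth)
  have eW: "e \<in> W" using p pne unfolding e_def by auto
  have key: "\<exists>i. Suc i = n - 1 \<and> c = p ! i" if cW: "c \<in> W" and ec: "E e c" for c
  proof (cases "c \<in> set p")
    case False
    have "is_path V E [c]" using cW W unfolding is_path_def is_walk_def by auto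
    then have "is_path V E (p @ [c])" using is_path_append[of V E p "[c]"] p False ec e_def by auto
    moreover have "set (p @ [c]) \<subseteq> W" using p cW by auto
    ultimately have "length (p @ [c]) \<le> length p" using pmax by blast
    then show ?thesis by simp
  next
    case True
    then obtain i where i: "i < n" "p ! i = c" unfolding n_def by (metis in_set_conv_nth)
    have "i \<noteq> n - 1" using i e_eq ec irr by auto
    moreover have "\<not> (i + 2 \<le> n - 1)"
    proof
      assume "i + 2 \<le> n - 1"
      then have "has_cycle V E" using cycle_from_path[of V E p i "n - 1"] p i ec e_eq n1 n_def by auto
      then show False using nc by simp
    qed
    ultimately show ?thesis using i by (intro exI[of _ i]) auto
  qed
  obtain a b where ab: "a \<noteq> b" "a \<in> W" "b \<in> W" "E e a" "E e b" using deg eW by blast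
  obtain i where i: "Suc i = n - 1" "a = p ! i" using key ab by blast
  obtain i' where i': "Suc i' = n - 1" "b = p ! i'" using key ab by blast
  have "i = i'" using i(1) i'(1) by linarith
  then have "a = b" using i(2) i'(2) by simp
  then show False using ab(1) by simp
qed

lemma cover_path: "path_cover V E Q \<Longrightarrow> p \<in> Q \<Longrightarrow> is_path V E p"
  unfolding path_cover_def by blast

lemma cover_ne: "path_cover V E Q \<Longrightarrow> p \<in> Q \<Longrightarrow> p \<noteq> []"
  unfolding path_cover_def is_path_def is_walk_def by blast

lemma cover_sub: "path_cover V E Q \<Longrightarrow> p \<in> Q \<Longrightarrow> set p \<subseteq> V"
  unfolding path_cover_def by blast

lemma cover_in: "path_cover V E Q \<Longrightarrow> v \<in> V \<Longrightarrow> \<exists>R\<in>Q. v \<in> set R"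
  unfolding path_cover_def by blast

lemma cover_uniq: "path_cover V E Q \<Longrightarrow> p \<in> Q \<Longrightarrow> q \<in> Q \<Longrightarrow> v \<in> set p \<Longrightarrow> v \<in> set q \<Longrightarrow> p = q"
  unfolding path_cover_def by blast

lemma cover_disj: "path_cover V E Q \<Longrightarrow> p \<in> Q \<Longrightarrow> q \<in> Q \<Longrightarrow> p \<noteq> q \<Longrightarrow> set p \<inter> set q = {}"
  unfolding path_cover_def by blast

lemma cover_hd_inj: "path_cover V E Q \<Longrightarrow> inj_on hd Q"
  by (smt (verit, best) cover_ne cover_uniq hd_in_set inj_onI)

lemma cover_finite: "finite V \<Longrightarrow> path_cover V E Q \<Longrightarrow> finite Q"
proof -
  assume f: "finite V" and c: "path_cover V E Q"
  have "hd ` Q \<subseteq> V" using c cover_ne cover_sub hd_in_set by fastforce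
  then have "finite (hd ` Q)" using f finite_subset by blast
  then show "finite Q" using finite_imageD cover_hd_inj[OF c] by blast
qed

lemma cover_join:
  assumes c: "path_cover V E Q" and pq: "p \<in> Q" "q \<in> Q" "p \<noteq> q" and e: "E (last p) (hd q)"
  shows "path_cover V E (insert (p @ q) (Q - {p, q}))"
    and "finite Q \<Longrightarrow> card (insert (p @ q) (Q - {p, q})) + 1 = card Q"
proof -
  have d: "set p \<inter> set q = {}" using cover_disj c pq by blast
  have pa: "is_path V E (p @ q)" using is_path_append cover_path c pq d e by blast
  have nin: "p @ q \<notin> Q - {p, q}"
  proof
    assume a: "p @ q \<in> Q - {p, q}"
    have pn: "p \<noteq> []" using cover_ne c pq(1) by blast
    have "hd p \<in> set (p @ q)" "hd p \<in> set p" using hd_in_set[OF pn] by auto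
    then show False using cover_uniq[OF c _ pq(1)] a by blast
  qed
  show "path_cover V E (insert (p @ q) (Q - {p, q}))"
    unfolding path_cover_def
  proof (intro conjI ballI impI)
    fix r assume "r \<in> insert (p @ q) (Q - {p, q})"
    then show "is_path V E r" using pa cover_path c by blast
  next
    fix r s assume r: "r \<in> insert (p @ q) (Q - {p, q})" and s: "s \<in> insert (p @ q) (Q - {p, q})" and rs: "r \<noteq> s"
    show "set r \<inter> set s = {}"
    proof -
      have "set (p @ q) \<inter> set t = {}" if "t \<in> Q - {p, q}" for t
        using cover_disj[OF c] pq that by auto
      then show ?thesis using r s rs cover_disj[OF c] by (auto simp: Int_commute) blast+
    qed
  next
    show "(\<Union>r\<in>insert (p @ q) (Q - {p, q}). set r) = V"
    proof -
      have "(\<Union>r\<in>insert (p @ q) (Q - {p, q}). set r) = (\<Union>r\<in>Q. set r)" using pq by auto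
      then show ?thesis using c unfolding path_cover_def by simp
    qed
  qed
  assume f: "finite Q"
  have "card {p, q} \<le> card Q" using pq f by (intro card_mono) auto
  then have "2 \<le> card Q" using pq(3) by simp
  then have "card (Q - {p, q}) + 2 = card Q" using pq f by (simp add: card_Diff_subset)
  then show "card (insert (p @ q) (Q - {p, q})) + 1 = card Q" using nin f by simp
qed

lemma cover_split:
  assumes c: "path_cover V E Q" and R: "R \<in> Q" and j: "0 < j" "j < length R"
  shows "path_cover V E (insert (take j R) (insert (drop j R) (Q - {R})))"
    and "finite Q \<Longrightarrow> card (insert (take j R) (insert (drop j R) (Q - {R}))) = card Q + 1"
proof -
  have pR: "is_path V E R" using c R cover_path by blast
  have dR: "distinct R" using pR unfolding is_path_def by blast
  have d: "set (take j R) \<inter> set (drop j R) = {}" using set_take_disj_set_drop_if_distinct dR by blast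
  have ne1: "take j R \<noteq> []" and ne2: "drop j R \<noteq> []" using j by auto
  have s1: "set (take j R) \<subseteq> set R" and s2: "set (drop j R) \<subseteq> set R" by (auto dest: in_set_takeD in_set_dropD)
  have un: "set (take j R) \<union> set (drop j R) = set R" by (metis append_take_drop_id set_append)
  have nin1: "take j R \<notin> Q - {R}"
    using ne1 s1 cover_uniq[OF c _ R] hd_in_set by (metis Diff_iff insertI1 subsetD)
  have nin2: "drop j R \<notin> Q - {R}"
    using ne2 s2 cover_uniq[OF c _ R] hd_in_set by (metis Diff_iff insertI1 subsetD)
  have neq: "take j R \<noteq> drop j R" using d ne1 by (metis Int_absorb set_empty)
  have dis: "set t \<inter> set R = {}" if "t \<in> Q - {R}" for t using cover_disj[OF c] R that by blast
  show "path_cover V E (insert (take j R) (insert (drop j R) (Q - {R})))"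
    unfolding path_cover_def
  proof (intro conjI ballI impI)
    fix r assume "r \<in> insert (take j R) (insert (drop j R) (Q - {R}))"
    then show "is_path V E r" using is_path_take[OF pR] is_path_drop[OF pR] j cover_path c by blast
  next
    fix r s assume r: "r \<in> insert (take j R) (insert (drop j R) (Q - {R}))"
      and s: "s \<in> insert (take j R) (insert (drop j R) (Q - {R}))" and rs: "r \<noteq> s"
    show "set r \<inter> set s = {}"
      using r s rs d dis s1 s2 cover_disj[OF c] by (auto simp: Int_commute) blast+
  next
    show "(\<Union>r\<in>insert (take j R) (insert (drop j R) (Q - {R})). set r) = V"
    proof -
      have "(\<Union>r\<in>insert (take j R) (insert (drop j R) (Q - {R})). set r) = (\<Union>r\<in>Q. set r)"
        using R un by auto
      then show ?thesis using c unfolding path_cover_def by simp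
    qed
  qed
  assume f: "finite Q"
  have "card Q > 0" using R f card_gt_0_iff by blast
  then have "card (Q - {R}) + 1 = card Q" using R f by simp
  then show "card (insert (take j R) (insert (drop j R) (Q - {R}))) = card Q + 1"
    using nin1 nin2 neq f by simp
qed



lemma no_force_closed:
  assumes "active V E S w"
    and nf: "\<not> (\<exists>u\<in>S. \<exists>v\<in>V. v \<notin> S \<and> E u v \<and> (\<forall>w\<in>V. E u w \<and> w \<noteq> v \<longrightarrow> w \<in> S))"
  shows "w \<in> S"
  using assms(1)
proof induction
  case (init v)
  then show ?case .
next
  case (force u v)
  show ?case
  proof (rule ccontr)
    assume "v \<notin> S"
    then show False using nf force by blast
  qed
qed

lemma zf_chains:
  assumes "finite V" "\<forall>u v. E u v \<longrightarrow> u \<in> V \<and> v \<in> V" "S \<subseteq> V" "\<forall>v\<in>V. active V E S v"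
  shows "\<exists>Q. path_cover V E Q \<and> hd ` Q = S"
  using assms
proof (induction "card V" arbitrary: V E S rule: less_induct)
  case less
  show ?case
  proof (cases "S = V")
    case True
    define Q where "Q = (\<lambda>v. [v]) ` V"
    have "path_cover V E Q" unfolding path_cover_def Q_def is_path_def is_walk_def by auto
    moreover have "hd ` Q = S" unfolding Q_def using True by (simp add: image_image)
    ultimately show ?thesis by blast
  next
    case False
    have "\<exists>u\<in>S. \<exists>v\<in>V. v \<notin> S \<and> E u v \<and> (\<forall>w\<in>V. E u w \<and> w \<noteq> v \<longrightarrow> w \<in> S)"
    proof (rule ccontr)
      assume nf: "\<not> ?thesis"
      have "V \<subseteq> S" using no_force_closed[OF _ nf] less.prems(4) by blast
      then show False using False less.prems(3) by blast
    qed
    then obtain u v where u: "u \<in> S" "v \<in> V" "v \<notin> S" "E u v"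
      and uw: "\<forall>w\<in>V. E u w \<and> w \<noteq> v \<longrightarrow> w \<in> S" by blast
    have uV: "u \<in> V" using u less.prems(3) by blast
    have uv: "u \<noteq> v" using u by blast
    define V' where "V' = V - {u}"
    define E' where "E' = (\<lambda>a b. E a b \<and> a \<noteq> u \<and> b \<noteq> u)"
    define S' where "S' = insert v (S - {u})"
    have tr: "w \<noteq> u \<longrightarrow> active V' E' S' w" if "active V E S w" for w
      using that
    proof induction
      case (init w)
      then show ?case unfolding S'_def by (auto intro: active.init)
    next
      case (force u0 w)
      show ?case
      proof
        assume wu: "w \<noteq> u"
        show "active V' E' S' w"
        proof (cases "u0 = u")
          case True
          then have "w \<in> S'" using uw force.hyps wu unfolding S'_def by auto
          then show ?thesis by (rule active.init)
        next
          case False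
          show ?thesis
          proof (rule active.force[of u0])
            show "u0 \<in> V'" using False force.hyps unfolding V'_def by blast
            show "active V' E' S' u0" using False force.IH by blast
            show "w \<in> V'" using wu force.hyps unfolding V'_def by blast
            show "E' u0 w" using wu False force.hyps unfolding E'_def by blast
            show "\<forall>w'\<in>V'. E' u0 w' \<and> w' \<noteq> w \<longrightarrow> active V' E' S' w'"
              using force unfolding V'_def E'_def by blast
          qed
        qed
      qed
    qed
    have act': "\<forall>w\<in>V'. active V' E' S' w" using tr less.prems(4) unfolding V'_def by blast
    have lt: "card V' < card V" using uV less.prems(1) unfolding V'_def by (meson card_Diff1_less)
    have fV': "finite V'" using less.prems(1) unfolding V'_def by blast
    have EV': "\<forall>a b. E' a b \<longrightarrow> a \<in> V' \<and> b \<in> V'" using less.prems(2) unfolding E'_def V'_def by blast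
    have SV': "S' \<subseteq> V'" using less.prems(3) u uv unfolding S'_def V'_def by blast
    obtain Q' where Q': "path_cover V' E' Q'" "hd ` Q' = S'"
      using less.hyps[OF lt fV' EV' SV' act'] by blast
    obtain p0 where p0: "p0 \<in> Q'" "hd p0 = v" using Q'(2) unfolding S'_def by (metis imageE insertI1)
    have p0ne: "p0 \<noteq> []" using cover_ne Q'(1) p0(1) by blast
    have pp0: "is_path V E p0"
      using is_path_mono[OF cover_path[OF Q'(1) p0(1)]] unfolding V'_def E'_def by blast
    have up0: "u \<notin> set p0" using cover_sub[OF Q'(1) p0(1)] unfolding V'_def by blast
    have pu: "is_path V E [u]" using uV unfolding is_path_def is_walk_def by auto
    have pup: "is_path V E (u # p0)"
      using is_path_append[OF pu pp0] up0 p0 u(4) by simp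
    define Q where "Q = insert (u # p0) (Q' - {p0})"
    have other: "is_path V E q \<and> u \<notin> set q \<and> set q \<inter> set p0 = {}" if "q \<in> Q' - {p0}" for q
    proof -
      have "is_path V E q"
        using is_path_mono[OF cover_path[OF Q'(1)]] that unfolding V'_def E'_def by blast
      moreover have "u \<notin> set q" using cover_sub[OF Q'(1)] that unfolding V'_def by blast
      moreover have "set q \<inter> set p0 = {}" using cover_disj[OF Q'(1)] that p0(1) by blast
      ultimately show ?thesis by blast
    qed
    have cov: "path_cover V E Q"
      unfolding path_cover_def
    proof (intro conjI ballI impI)
      fix r assume "r \<in> Q" then show "is_path V E r" using pup other unfolding Q_def by blast
    next
      fix r s assume r: "r \<in> Q" and s: "s \<in> Q" and rs: "r \<noteq> s"
      show "set r \<inter> set s = {}"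
      proof (cases "r = u # p0")
        case True
        then have "s \<in> Q' - {p0}" using s rs unfolding Q_def by auto
        then show ?thesis using other True by auto
      next
        case False
        then have r': "r \<in> Q' - {p0}" using r unfolding Q_def by blast
        show ?thesis
        proof (cases "s = u # p0")
          case True
          then show ?thesis using other[OF r'] by auto
        next
          case False
          then have "s \<in> Q' - {p0}" using s unfolding Q_def by blast
          then show ?thesis using cover_disj[OF Q'(1)] r' rs by blast
        qed
      qed
    next
      have "(\<Union>r\<in>Q. set r) = insert u (set p0 \<union> (\<Union>r\<in>Q' - {p0}. set r))" unfolding Q_def by auto
      also have "set p0 \<union> (\<Union>r\<in>Q' - {p0}. set r) = (\<Union>r\<in>Q'. set r)" using p0(1) by blast
      also have "\<dots> = V'" using Q'(1) unfolding path_cover_def by blast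
      finally show "(\<Union>r\<in>Q. set r) = V" using uV unfolding V'_def by auto
    qed
    have "hd ` (Q' - {p0}) = S' - {v}"
    proof
      show "hd ` (Q' - {p0}) \<subseteq> S' - {v}"
      proof
        fix h assume "h \<in> hd ` (Q' - {p0})"
        then obtain q where q: "q \<in> Q' - {p0}" "h = hd q" by blast
        have "q \<noteq> []" using cover_ne[OF Q'(1)] q by blast
        then have "h \<in> set q" using q hd_in_set by simp
        then have "h \<noteq> v" using other[OF q(1)] p0 p0ne hd_in_set by blast
        then show "h \<in> S' - {v}" using Q'(2) q by blast
      qed
    next
      show "S' - {v} \<subseteq> hd ` (Q' - {p0})" using Q'(2) p0 by blast
    qed
    then have "hd ` Q = insert u (S' - {v})" unfolding Q_def by simp
    also have "\<dots> = S" using u uv unfolding S'_def by blast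
    finally show ?thesis using cov by blast
  qed
qed



lemma active_transfer:
  assumes "active V' E' S' v" "V' \<subseteq> V" "\<forall>s\<in>S'. active V E S s" "\<forall>a b. E' a b \<longrightarrow> E a b"
    "\<forall>u\<in>V'. \<forall>w\<in>V'. E u w \<longrightarrow> E' u w"
    "\<forall>u\<in>V'. \<forall>w\<in>V. E u w \<longrightarrow> w \<notin> V' \<longrightarrow> active V E S w"
  shows "active V E S v"
  using assms(1)
proof induction
  case (init v)
  then show ?case using assms(3) by blast
next
  case (force u v)
  show ?case
  proof (rule active.force[of u])
    show "u \<in> V" "active V E S u" "v \<in> V" "E u v" using force assms(2,4) by auto
    show "\<forall>w\<in>V. E u w \<and> w \<noteq> v \<longrightarrow> active V E S w"
    proof (intro ballI impI)
      fix w assume w: "w \<in> V" "E u w \<and> w \<noteq> v"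
      show "active V E S w"
      proof (cases "w \<in> V'")
        case True
        then have "E' u w" using assms(5) force.hyps(1) w by blast
        then show ?thesis using force.IH True w by blast
      next
        case False
        then show ?thesis using assms(6) force.hyps(1) w by blast
      qed
    qed
  qed
qed

lemma leaf_path:
  assumes sg: "simple_graph V E" and nc: "\<not> has_cycle V E" and c: "path_cover V E P" and ne: "V \<noteq> {}"
  shows "\<exists>R\<in>P. \<forall>a b a' b'. a \<in> set R \<and> b \<in> V \<and> b \<notin> set R \<and> E a b \<and>
                 a' \<in> set R \<and> b' \<in> V \<and> b' \<notin> set R \<and> E a' b' \<longrightarrow> a = a' \<and> b = b'"
proof (rule ccontr)
  assume H: "\<not> ?thesis"
  have H': "\<forall>R\<in>P. \<exists>a b a' b'. a \<in> set R \<and> b \<in> V \<and> b \<notin> set R \<and> E a b \<and>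
                 a' \<in> set R \<and> b' \<in> V \<and> b' \<notin> set R \<and> E a' b' \<and> (a \<noteq> a' \<or> b \<noteq> b')"
    using H by blast
  have sym: "\<And>a b. E a b \<Longrightarrow> E b a" using sg unfolding simple_graph_def by blast
  have EV: "\<And>a b. E a b \<Longrightarrow> a \<in> V \<and> b \<in> V" using sg unfolding simple_graph_def by blast
  define att where "att R i \<longleftrightarrow> i < length R \<and> (\<exists>b\<in>V. b \<notin> set R \<and> E (R ! i) b)" for R i
  define W where "W = {v. \<exists>R\<in>P. \<exists>j<length R. v = R ! j \<and> (\<exists>i\<le>j. att R i) \<and> (\<exists>l. j \<le> l \<and> att R l)}"
  have WV: "W \<subseteq> V"
  proof
    fix v assume "v \<in> W"
    then obtain R j where "R \<in> P" "j < length R" "v = R ! j" unfolding W_def by blast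
    then show "v \<in> V" using cover_sub[OF c] nth_mem by blast
  qed
  have attW: "R ! i \<in> W" if "R \<in> P" "att R i" for R i
    using that unfolding W_def att_def by blast
  have outW: "b \<in> W" if R: "R \<in> P" and ab: "a \<in> set R" "b \<in> V" "b \<notin> set R" "E a b" for R a b
  proof -
    obtain Rb where Rb: "Rb \<in> P" "b \<in> set Rb" using cover_in[OF c ab(2)] by blast
    then obtain m where m: "m < length Rb" "Rb ! m = b" by (metis in_set_conv_nth)
    have "Rb \<noteq> R" using Rb ab by blast
    then have "a \<notin> set Rb" using cover_disj[OF c Rb(1) R] ab(1) by blast
    moreover have "a \<in> V" using EV ab(4) by blast
    ultimately have "att Rb m" unfolding att_def using m sym[OF ab(4)] by blast
    then show ?thesis using attW Rb m by blast
  qed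
  have Wne: "W \<noteq> {}"
  proof -
    obtain v where "v \<in> V" using ne by blast
    then obtain R where R: "R \<in> P" using cover_in[OF c] by blast
    then obtain a b where ab: "a \<in> set R" "b \<in> V" "b \<notin> set R" "E a b" using H' by blast
    then have "b \<in> W" using outW R by blast
    then show ?thesis by blast
  qed
  have deg: "\<forall>w\<in>W. \<exists>x y. x \<noteq> y \<and> x \<in> W \<and> y \<in> W \<and> E w x \<and> E w y"
  proof
    fix w assume "w \<in> W"
    then obtain R j where R: "R \<in> P" and j: "j < length R" "w = R ! j"
      and ij: "\<exists>i\<le>j. att R i" and jl: "\<exists>l. j \<le> l \<and> att R l" unfolding W_def by blast
    have pR: "is_path V E R" using cover_path[OF c R] .
    have dR: "distinct R" using pR unfolding is_path_def by blast
    have edge: "E (R ! k) (R ! Suc k)" if "Suc k < length R" for k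
      using pR that unfolding is_path_def is_walk_def by blast
    have N1: "R ! (j - 1) \<in> W \<and> E w (R ! (j - 1)) \<and> j - 1 < length R \<and> j - 1 \<noteq> j" if ex: "\<exists>i'<j. att R i'"
    proof -
      obtain i' where i': "i' < j" "att R i'" using ex by blast
      have "Suc (j - 1) = j" using i' by simp
      then have "E (R ! (j - 1)) w" using edge[of "j - 1"] j by simp
      moreover have "R ! (j - 1) \<in> W"
      proof -
        have a: "\<exists>i\<le>j - 1. att R i" using i' by (intro exI[of _ i']) auto
        have b: "\<exists>l. j - 1 \<le> l \<and> att R l" using jl by (meson diff_le_self le_trans)
        have jm: "j - 1 < length R" using j by simp
        show ?thesis unfolding W_def using R jm a b by blast
      qed
      ultimately show ?thesis using sym i' j by auto
    qed
    have N2: "R ! Suc j \<in> W \<and> E w (R ! Suc j) \<and> Suc j < length R" if ex: "\<exists>l'>j. att R l'"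
    proof -
      obtain l' where l': "j < l'" "att R l'" using ex by blast
      have sj: "Suc j < length R" using l' unfolding att_def by simp
      then have "E w (R ! Suc j)" using edge[of j] j by simp
      moreover have "R ! Suc j \<in> W"
      proof -
        have a: "\<exists>i\<le>Suc j. att R i" using ij by (meson le_SucI)
        have b: "\<exists>l. Suc j \<le> l \<and> att R l" using l' by (intro exI[of _ l']) auto
        show ?thesis unfolding W_def using R sj a b by blast
      qed
      ultimately show ?thesis using sj by auto
    qed
    have N3: "\<exists>b. b \<in> W \<and> b \<notin> set R \<and> E w b" if ex: "att R j"
    proof -
      obtain b where "b \<in> V" "b \<notin> set R" "E (R ! j) b" using ex unfolding att_def by blast
      then show ?thesis using outW[OF R, of "R ! j" b] j by auto
    qed
    show "\<exists>x y. x \<noteq> y \<and> x \<in> W \<and> y \<in> W \<and> E w x \<and> E w y"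
    proof (cases "\<exists>i'<j. att R i'")
      case A1: True
      show ?thesis
      proof (cases "\<exists>l'>j. att R l'")
        case True
        have "R ! (j - 1) \<noteq> R ! Suc j" using N1[OF A1] N2[OF True] dR by (simp add: nth_eq_iff_index_eq)
        then show ?thesis using N1[OF A1] N2[OF True] by blast
      next
        case False
        then have "att R j" using jl by (metis le_neq_implies_less)
        then obtain b where "b \<in> W" "b \<notin> set R" "E w b" using N3 by blast
        moreover have "R ! (j - 1) \<in> set R" using N1[OF A1] by simp
        ultimately show ?thesis using N1[OF A1] by metis
      qed
    next
      case A2: False
      then have attj: "att R j" using ij by (metis le_neq_implies_less)
      show ?thesis
      proof (cases "\<exists>l'>j. att R l'")
        case True
        obtain b where "b \<in> W" "b \<notin> set R" "E w b" using N3 attj by blast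
        moreover have "R ! Suc j \<in> set R" using N2[OF True] by simp
        ultimately show ?thesis using N2[OF True] by metis
      next
        case False
        have only: "a = w" if ex: "a \<in> set R" "b \<in> V" "b \<notin> set R" "E a b" for a b
        proof -
          obtain k where k: "k < length R" "R ! k = a" using ex(1) by (metis in_set_conv_nth)
          then have "att R k" unfolding att_def using ex by blast
          then have "k = j" using A2 False by (metis linorder_neqE_nat)
          then show ?thesis using k j by simp
        qed
        obtain a b a' b' where ab: "a \<in> set R" "b \<in> V" "b \<notin> set R" "E a b"
          "a' \<in> set R" "b' \<in> V" "b' \<notin> set R" "E a' b'" "a \<noteq> a' \<or> b \<noteq> b'"
          using H' R by blast
        have "a = w" "a' = w" using only ab by blast+
        then have "b \<noteq> b'" "E w b" "E w b'" using ab by auto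
        moreover have "b \<in> W" "b' \<in> W" using outW[OF R] ab by blast+
        ultimately show ?thesis by blast
      qed
    qed
  qed
  have "has_cycle V E" using deg2_cycle[OF sg WV Wne deg] .
  then show False using nc by simp
qed



lemma zf_paths:
  assumes "simple_graph V E" "\<not> has_cycle V E" "path_cover V E P" "S \<subseteq> V"
    "\<forall>R\<in>P. hd R \<in> S \<or> last R \<in> S"
  shows "\<forall>v\<in>V. active V E S v"
  using assms
proof (induction "card V" arbitrary: V E P S rule: less_induct)
  case less
  note sg = less.prems(1) and nc = less.prems(2) and c = less.prems(3)
  have sym: "\<And>a b. E a b \<Longrightarrow> E b a" using sg unfolding simple_graph_def by blast
  have irr: "\<And>a. \<not> E a a" using sg unfolding simple_graph_def by blast
  have EV: "\<And>a b. E a b \<Longrightarrow> a \<in> V \<and> b \<in> V" using sg unfolding simple_graph_def by blast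
  have fV: "finite V" using sg unfolding simple_graph_def by blast
  show ?case
  proof (cases "V = {}")
    case True
    then show ?thesis by blast
  next
    case False
    obtain R where R: "R \<in> P" and one: "\<forall>a b a' b'. a \<in> set R \<and> b \<in> V \<and> b \<notin> set R \<and> E a b \<and>
                 a' \<in> set R \<and> b' \<in> V \<and> b' \<notin> set R \<and> E a' b' \<longrightarrow> a = a' \<and> b = b'"
      using leaf_path[OF sg nc c False] by blast
    have pR: "is_path V E R" using cover_path[OF c R] .
    have Rne: "R \<noteq> []" using cover_ne[OF c R] .
    define R0 where "R0 = (if hd R \<in> S then R else rev R)"
    have pR0: "is_path V E R0" unfolding R0_def using pR is_path_rev[OF pR sym] by simp
    have sR0: "set R0 = set R" unfolding R0_def by simp
    have hR0: "hd R0 \<in> S" unfolding R0_def using less.prems(5) R Rne by (auto simp: hd_rev)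
    define n where "n = length R0"
    have n0: "0 < n" unfolding n_def R0_def using Rne by simp
    have dR0: "distinct R0" using pR0 unfolding is_path_def by blast
    have edge: "E (R0 ! k) (R0 ! Suc k)" if "Suc k < n" for k
      using pR0 that unfolding is_path_def is_walk_def n_def by blast
    have inV: "R0 ! k \<in> V" if "k < n" for k using pR0 that walk_nth_V unfolding is_path_def n_def by blast
    have nbr: "\<exists>m<n. w = R0 ! m \<and> (m = Suc i \<or> Suc m = i)" if h: "i < n" "w \<in> set R" "E (R0 ! i) w" for i w
    proof -
      obtain m where m: "m < n" "w = R0 ! m" using h(2) sR0 unfolding n_def by (metis in_set_conv_nth)
      have "m \<noteq> i" using irr h(3) m by blast
      then consider "i < m" | "m < i" by linarith
      then show ?thesis
      proof cases
        case 1
        then have "m = Suc i" using path_nbr[OF nc pR0 1] m h(3) sym unfolding n_def by blast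
        then show ?thesis using m by blast
      next
        case 2
        then have "i = Suc m" using path_nbr[OF nc pR0 2] m h sym unfolding n_def by blast
        then show ?thesis using m by blast
      qed
    qed
    have step: "active V E S (R0 ! Suc i)"
      if si: "Suc i < n" and prev: "\<forall>m\<le>i. active V E S (R0 ! m)"
        and outs: "\<forall>w\<in>V. w \<notin> set R \<longrightarrow> E (R0 ! i) w \<longrightarrow> active V E S w" for i
    proof (rule active.force[of "R0 ! i"])
      show "R0 ! i \<in> V" "active V E S (R0 ! i)" "R0 ! Suc i \<in> V" "E (R0 ! i) (R0 ! Suc i)"
        using inV si prev edge by auto
      show "\<forall>w\<in>V. E (R0 ! i) w \<and> w \<noteq> R0 ! Suc i \<longrightarrow> active V E S w"
      proof (intro ballI impI)
        fix w assume w: "w \<in> V" "E (R0 ! i) w \<and> w \<noteq> R0 ! Suc i"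
        show "active V E S w"
        proof (cases "w \<in> set R")
          case True
          have "i < n" using si by simp
          then obtain m where m: "m < n" "w = R0 ! m" "m = Suc i \<or> Suc m = i"
            using nbr[of i w] True w(2) by blast
          then have "m \<le> i" using w by auto
          then show ?thesis using prev m by blast
        next
          case False
          then show ?thesis using outs w by blast
        qed
      qed
    qed
    have R0ne: "R0 \<noteq> []" using n0 unfolding n_def by auto
    have r00: "active V E S (R0 ! 0)" using hR0 hd_conv_nth[OF R0ne] by (auto intro: active.init)
    have stepA: "\<forall>m\<le>i. active V E S (R0 ! m)"
      if "i < n" "\<forall>m<i. \<forall>b\<in>V. b \<notin> set R \<longrightarrow> \<not> E (R0 ! m) b" for i
      using that
    proof (induction i)
      case 0
      then show ?case using r00 by auto
    next
      case (Suc i)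
      then have prev: "\<forall>m\<le>i. active V E S (R0 ! m)" by auto
      have "active V E S (R0 ! Suc i)" using step[OF Suc.prems(1) prev] Suc.prems(2) by blast
      then show ?case using prev le_Suc_eq by blast
    qed
    define V' where "V' = V - set R"
    define E' where "E' = (\<lambda>a b. E a b \<and> a \<in> V' \<and> b \<in> V')"
    define S' where "S' = S \<inter> V'"
    define P' where "P' = P - {R}"
    have sg': "simple_graph V' E'" using sg fV unfolding simple_graph_def E'_def V'_def by auto
    have nc': "\<not> has_cycle V' E'"
      using nc has_cycle_mono[of V' E' V E] unfolding V'_def E'_def by blast
    have disR: "set R' \<inter> set R = {}" if "R' \<in> P'" for R'
      using cover_disj[OF c] R that unfolding P'_def by blast
    have subV': "set R' \<subseteq> V'" if "R' \<in> P'" for R'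
      using disR[OF that] cover_sub[OF c] that unfolding P'_def V'_def by blast
    have c': "path_cover V' E' P'"
      unfolding path_cover_def
    proof (intro conjI ballI impI)
      fix R' assume R': "R' \<in> P'"
      have "is_path V E R'" using cover_path[OF c] R' unfolding P'_def by blast
      then show "is_path V' E' R'" using subV'[OF R'] unfolding is_path_def is_walk_def E'_def
        by (auto dest: nth_mem)
    next
      fix p q assume "p \<in> P'" "q \<in> P'" "p \<noteq> q"
      then show "set p \<inter> set q = {}" using cover_disj[OF c] unfolding P'_def by blast
    next
      have "(\<Union>r\<in>P. set r) = V" using c unfolding path_cover_def by blast
      then show "(\<Union>r\<in>P'. set r) = V'" using R cover_disj[OF c] unfolding P'_def V'_def by blast
    qed
    have SV': "S' \<subseteq> V'" unfolding S'_def by blast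
    have ends': "\<forall>R'\<in>P'. hd R' \<in> S' \<or> last R' \<in> S'"
    proof
      fix R' assume R': "R' \<in> P'"
      have "R' \<noteq> []" using cover_ne[OF c'] R' .
      then have "hd R' \<in> V'" "last R' \<in> V'" using subV'[OF R'] by auto
      then show "hd R' \<in> S' \<or> last R' \<in> S'" using less.prems(5) R' unfolding S'_def P'_def by blast
    qed
    have lt: "card V' < card V"
    proof -
      have "hd R \<in> set R" "set R \<subseteq> V" using Rne cover_sub[OF c R] by auto
      then have "V - set R \<subset> V" by blast
      then show ?thesis unfolding V'_def using psubset_card_mono[OF fV] by blast
    qed
    have IH: "\<forall>v\<in>V'. active V' E' S' v" using less.hyps[OF lt sg' nc' c' SV' ends'] .
    have stepB: "\<forall>v\<in>V'. active V E S v"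
    proof
      fix v assume v: "v \<in> V'"
      show "active V E S v"
      proof (rule active_transfer[of V' E' S' v])
        show "active V' E' S' v" using IH v by blast
        show "V' \<subseteq> V" unfolding V'_def by blast
        show "\<forall>s\<in>S'. active V E S s" unfolding S'_def by (auto intro: active.init)
        show "\<forall>a b. E' a b \<longrightarrow> E a b" unfolding E'_def by blast
        show "\<forall>u\<in>V'. \<forall>w\<in>V'. E u w \<longrightarrow> E' u w" unfolding E'_def by blast
        show "\<forall>u\<in>V'. \<forall>w\<in>V. E u w \<longrightarrow> w \<notin> V' \<longrightarrow> active V E S w"
        proof (intro ballI impI)
          fix u w assume u: "u \<in> V'" and w: "w \<in> V" "E u w" "w \<notin> V'"
          have wR: "w \<in> set R" using w unfolding V'_def by blast
          then obtain k where k: "k < n" "w = R0 ! k" using sR0 unfolding n_def by (metis in_set_conv_nth)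
          have nice: "\<forall>m<k. \<forall>b\<in>V. b \<notin> set R \<longrightarrow> \<not> E (R0 ! m) b"
          proof (intro allI impI ballI notI)
            fix m b assume m: "m < k" and b: "b \<in> V" "b \<notin> set R" "E (R0 ! m) b"
            have "R0 ! m \<in> set R" using m k sR0 unfolding n_def by (metis less_trans nth_mem)
            moreover have "u \<in> V" "u \<notin> set R" using u unfolding V'_def by auto
            ultimately have "R0 ! m = w" using one b wR sym[OF w(2)] by blast
            then have "m = k" using k m dR0 unfolding n_def by (simp add: nth_eq_iff_index_eq)
            then show False using m by simp
          qed
          show "active V E S w" using stepA[OF k(1) nice] k by blast
        qed
      qed
    qed
    have stepC: "\<forall>m\<le>i. active V E S (R0 ! m)" if "i < n" for i
      using that
    proof (induction i)
      case 0
      then show ?case using r00 by auto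
    next
      case (Suc i)
      then have prev: "\<forall>m\<le>i. active V E S (R0 ! m)" by auto
      have "\<forall>w\<in>V. w \<notin> set R \<longrightarrow> E (R0 ! i) w \<longrightarrow> active V E S w"
        using stepB unfolding V'_def by blast
      then have "active V E S (R0 ! Suc i)" using step[OF Suc.prems(1) prev] by blast
      then show ?case using prev le_Suc_eq by blast
    qed
    show ?thesis
    proof
      fix v assume v: "v \<in> V"
      show "active V E S v"
      proof (cases "v \<in> set R")
        case True
        then obtain k where "k < n" "v = R0 ! k" using sR0 unfolding n_def by (metis in_set_conv_nth)
        then show ?thesis using stepC by blast
      next
        case False
        then show ?thesis using stepB v unfolding V'_def by blast
      qed
    qed
  qed
qed



definition big :: "'a set \<Rightarrow> ('a \<Rightarrow> 'a \<Rightarrow> bool) \<Rightarrow> 'a \<Rightarrow> bool" where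
  "big V E v \<longleftrightarrow> (\<exists>a b. a \<noteq> b \<and> a \<in> V \<and> b \<in> V \<and> E v a \<and> E v b)"

lemma mincov_card:
  assumes "min_path_cover V E Q" "path_cover V E Q'" "finite Q'" "card Q' = card Q"
  shows "min_path_cover V E Q'"
  using assms unfolding min_path_cover_def by auto

lemma join_contra:
  assumes m: "min_path_cover V E Q" and pq: "p \<in> Q" "q \<in> Q" "p \<noteq> q" and e: "E (last p) (hd q)"
  shows False
proof -
  have c: "path_cover V E Q" and f: "finite Q" using m unfolding min_path_cover_def by auto
  have "path_cover V E (insert (p @ q) (Q - {p, q}))" using cover_join(1)[OF c pq e] .
  then have "card Q \<le> card (insert (p @ q) (Q - {p, q}))" using m unfolding min_path_cover_def by blast
  moreover have "card (insert (p @ q) (Q - {p, q})) + 1 = card Q" using cover_join(2)[OF c pq e f] .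
  ultimately show False by simp
qed

lemma split_facts:
  assumes c: "path_cover V E Q" and R: "R \<in> Q" "0 < j" "j < length R" and p: "p \<in> Q" "p \<noteq> R"
  shows "p \<noteq> drop j R" "p \<noteq> take j R" "take j R \<noteq> drop j R"
proof -
  have pR: "is_path V E R" using cover_path[OF c R(1)] .
  have dR: "distinct R" using pR unfolding is_path_def by blast
  have d: "set (take j R) \<inter> set (drop j R) = {}" using set_take_disj_set_drop_if_distinct dR by blast
  have ne1: "take j R \<noteq> []" and ne2: "drop j R \<noteq> []" using R by auto
  have s1: "set (take j R) \<subseteq> set R" and s2: "set (drop j R) \<subseteq> set R" by (auto dest: in_set_takeD in_set_dropD)
  have dp: "set p \<inter> set R = {}" using cover_disj[OF c p(1) R(1) p(2)] .
  show "p \<noteq> drop j R" using dp s2 ne2 by (metis Int_absorb2 Int_assoc Int_empty_right set_empty)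
  show "p \<noteq> take j R" using dp s1 ne1 by (metis Int_absorb2 Int_assoc Int_empty_right set_empty)
  show "take j R \<noteq> drop j R" using d ne1 by (metis Int_absorb set_empty)
qed

lemma split_join_A:
  assumes m: "min_path_cover V E Q" and R: "R \<in> Q" "0 < j" "j < length R"
    and p: "p \<in> Q" "p \<noteq> R" and e: "E (last p) (R ! j)"
  shows "\<exists>Q'. min_path_cover V E Q' \<and> p @ drop j R \<in> Q' \<and> take j R \<in> Q'"
proof -
  have c: "path_cover V E Q" and f: "finite Q" using m unfolding min_path_cover_def by auto
  define Q1 where "Q1 = insert (take j R) (insert (drop j R) (Q - {R}))"
  have c1: "path_cover V E Q1" unfolding Q1_def using cover_split(1)[OF c R] .
  have k1: "card Q1 = card Q + 1" unfolding Q1_def using cover_split(2)[OF c R f] .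
  have f1: "finite Q1" unfolding Q1_def using f by simp
  note sf = split_facts[OF c R p]
  have pin: "p \<in> Q1" "drop j R \<in> Q1" "take j R \<in> Q1" unfolding Q1_def using p by auto
  have hd: "hd (drop j R) = R ! j" using hd_drop_conv_nth[of j R] R(3) by simp
  have e': "E (last p) (hd (drop j R))" using e hd by simp
  define Q' where "Q' = insert (p @ drop j R) (Q1 - {p, drop j R})"
  have c': "path_cover V E Q'" unfolding Q'_def using cover_join(1)[OF c1 pin(1,2) sf(1) e'] .
  have "card Q' + 1 = card Q1" unfolding Q'_def using cover_join(2)[OF c1 pin(1,2) sf(1) e' f1] .
  then have "card Q' = card Q" using k1 by simp
  moreover have "finite Q'" unfolding Q'_def using f1 by simp
  ultimately have "min_path_cover V E Q'" using mincov_card[OF m c'] by blast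
  moreover have "take j R \<in> Q'" unfolding Q'_def using pin(3) sf by auto
  ultimately show ?thesis unfolding Q'_def by blast
qed

lemma split_join_B:
  assumes m: "min_path_cover V E Q" and R: "R \<in> Q" "0 < j" "j < length R"
    and p: "p \<in> Q" "p \<noteq> R" and e: "E (R ! (j - 1)) (hd p)"
  shows "\<exists>Q'. min_path_cover V E Q' \<and> take j R @ p \<in> Q' \<and> drop j R \<in> Q'"
proof -
  have c: "path_cover V E Q" and f: "finite Q" using m unfolding min_path_cover_def by auto
  define Q1 where "Q1 = insert (take j R) (insert (drop j R) (Q - {R}))"
  have c1: "path_cover V E Q1" unfolding Q1_def using cover_split(1)[OF c R] .
  have k1: "card Q1 = card Q + 1" unfolding Q1_def using cover_split(2)[OF c R f] .
  have f1: "finite Q1" unfolding Q1_def using f by simp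
  note sf = split_facts[OF c R p]
  have pin: "p \<in> Q1" "drop j R \<in> Q1" "take j R \<in> Q1" unfolding Q1_def using p by auto
  have Rne: "R \<noteq> []" using R(3) by (cases R) auto
  then have tne: "take j R \<noteq> []" using R(2) by simp
  have "last (take j R) = take j R ! (j - 1)" using last_conv_nth[OF tne] R by simp
  also have "\<dots> = R ! (j - 1)" using R by simp
  finally have e': "E (last (take j R)) (hd p)" using e by simp
  have ne: "take j R \<noteq> p" using sf by simp
  define Q' where "Q' = insert (take j R @ p) (Q1 - {take j R, p})"
  have c': "path_cover V E Q'" unfolding Q'_def using cover_join(1)[OF c1 pin(3,1) ne e'] .
  have "card Q' + 1 = card Q1" unfolding Q'_def using cover_join(2)[OF c1 pin(3,1) ne e' f1] .
  then have "card Q' = card Q" using k1 by simp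
  moreover have "finite Q'" unfolding Q'_def using f1 by simp
  ultimately have "min_path_cover V E Q'" using mincov_card[OF m c'] by blast
  moreover have "drop j R \<in> Q'" unfolding Q'_def using pin(2) sf by auto
  ultimately show ?thesis unfolding Q'_def by blast
qed

lemma auto_big:
  assumes a: "automorphism V E \<phi>" and v: "v \<in> V" and EV: "\<And>a b. E a b \<Longrightarrow> a \<in> V \<and> b \<in> V"
  shows "big V E (\<phi> v) \<longleftrightarrow> big V E v"
proof -
  have bij: "bij_betw \<phi> V V" and iff: "\<forall>u\<in>V. \<forall>w\<in>V. E u w \<longleftrightarrow> E (\<phi> u) (\<phi> w)"
    using a unfolding automorphism_def by auto
  have inj: "inj_on \<phi> V" and surj: "\<phi> ` V = V" using bij unfolding bij_betw_def by auto
  show ?thesis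
  proof
    assume "big V E (\<phi> v)"
    then obtain a b where ab: "a \<noteq> b" "a \<in> V" "b \<in> V" "E (\<phi> v) a" "E (\<phi> v) b" unfolding big_def by blast
    obtain a' b' where "a' \<in> V" "b' \<in> V" "a = \<phi> a'" "b = \<phi> b'" using ab surj by (metis imageE)
    then show "big V E v" unfolding big_def using ab iff v by metis
  next
    assume "big V E v"
    then obtain a b where ab: "a \<noteq> b" "a \<in> V" "b \<in> V" "E v a" "E v b" unfolding big_def by blast
    have "\<phi> a \<noteq> \<phi> b" using inj ab inj_on_def by metis
    moreover have "\<phi> a \<in> V" "\<phi> b \<in> V" using ab surj by auto
    ultimately show "big V E (\<phi> v)" unfolding big_def using ab iff v by metis
  qed
qed



lemma lower_bound:
  assumes sg: "simple_graph V E" and m: "min_path_cover V E Q" and z: "zero_forcing_set V E S"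
  shows "card Q \<le> card S"
proof -
  have h1: "finite V" "\<forall>u v. E u v \<longrightarrow> u \<in> V \<and> v \<in> V" using sg unfolding simple_graph_def by auto
  have h2: "S \<subseteq> V" "\<forall>v\<in>V. active V E S v" using z unfolding zero_forcing_set_def by auto
  obtain Q' where Q': "path_cover V E Q'" "hd ` Q' = S" using zf_chains[OF h1 h2] by (elim exE conjE)
  have "card S = card Q'" using card_image[OF cover_hd_inj[OF Q'(1)]] Q'(2) by simp
  moreover have "card Q \<le> card Q'" using m Q'(1) unfolding min_path_cover_def by blast
  ultimately show ?thesis by simp
qed

lemma choice_minzf:
  assumes sg: "simple_graph V E" and nc: "\<not> has_cycle V E" and m: "min_path_cover V E Q"
    and W: "W \<in> Q" and e: "e = hd W \<or> e = last W"
  shows "min_zero_forcing_set V E (insert e (hd ` (Q - {W})))"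
proof -
  have c: "path_cover V E Q" and f: "finite Q" using m unfolding min_path_cover_def by auto
  define S where "S = insert e (hd ` (Q - {W}))"
  have Wne: "W \<noteq> []" using cover_ne[OF c W] .
  have eW: "e \<in> set W" using e Wne by auto
  have SV: "S \<subseteq> V"
  proof
    fix s assume "s \<in> S"
    then consider "s = e" | q where "q \<in> Q" "s = hd q" unfolding S_def by blast
    then show "s \<in> V"
    proof cases
      case 1 then show ?thesis using eW cover_sub[OF c W] by blast
    next
      case 2 then show ?thesis using cover_ne[OF c] cover_sub[OF c] hd_in_set by blast
    qed
  qed
  have ends: "\<forall>R\<in>Q. hd R \<in> S \<or> last R \<in> S" unfolding S_def using e by auto
  have zf: "zero_forcing_set V E S"
    unfolding zero_forcing_set_def using zf_paths[OF sg nc c SV ends] SV by blast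
  have enot: "e \<notin> hd ` (Q - {W})"
  proof
    assume "e \<in> hd ` (Q - {W})"
    then obtain q where q: "q \<in> Q" "q \<noteq> W" "e = hd q" by blast
    then have "e \<in> set q" using cover_ne[OF c q(1)] by simp
    then show False using cover_disj[OF c q(1) W q(2)] eW by blast
  qed
  have "card (hd ` (Q - {W})) = card (Q - {W})"
    using card_image inj_on_subset[OF cover_hd_inj[OF c]] by blast
  moreover have "card Q > 0" using W f card_gt_0_iff by blast
  ultimately have cS: "card S = card Q" unfolding S_def using enot f W by simp
  have "\<forall>S'. zero_forcing_set V E S' \<longrightarrow> card S \<le> card S'"
    using lower_bound[OF sg m] cS by simp
  then show ?thesis using zf unfolding min_zero_forcing_set_def S_def by blast
qed

lemma exchange_dir:
  assumes sg: "simple_graph V E" and nc: "\<not> has_cycle V E" and iso: "iso_unique_zf V E"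
    and m: "min_path_cover V E Q" and W: "W \<in> Q"
    and e1: "e1 = hd W \<or> e1 = last W" and e2: "e2 = hd W \<or> e2 = last W"
    and b1: "big V E e1"
  shows "big V E e2"
proof (rule ccontr)
  assume b2: "\<not> big V E e2"
  have c: "path_cover V E Q" and f: "finite Q" using m unfolding min_path_cover_def by auto
  have EV: "\<And>a b. E a b \<Longrightarrow> a \<in> V \<and> b \<in> V" using sg unfolding simple_graph_def by blast
  define C where "C = hd ` (Q - {W})"
  have A1: "min_zero_forcing_set V E (insert e1 C)" unfolding C_def using choice_minzf[OF sg nc m W e1] .
  have A2: "min_zero_forcing_set V E (insert e2 C)" unfolding C_def using choice_minzf[OF sg nc m W e2] .
  obtain \<phi> where phi: "automorphism V E \<phi>" "\<phi> ` (insert e1 C) = insert e2 C"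
    using iso A1 A2 unfolding iso_unique_zf_def by blast
  have inj: "inj_on \<phi> V" using phi(1) unfolding automorphism_def bij_betw_def by blast
  have A1V: "insert e1 C \<subseteq> V" using A1 unfolding min_zero_forcing_set_def zero_forcing_set_def by blast
  define Bg where "Bg = {v \<in> V. big V E v}"
  have img: "\<phi> ` (insert e1 C \<inter> Bg) = insert e2 C \<inter> Bg"
  proof
    show "\<phi> ` (insert e1 C \<inter> Bg) \<subseteq> insert e2 C \<inter> Bg"
    proof
      fix w assume "w \<in> \<phi> ` (insert e1 C \<inter> Bg)"
      then obtain v where v: "v \<in> insert e1 C" "v \<in> V" "big V E v" "w = \<phi> v" unfolding Bg_def by blast
      have "w \<in> insert e2 C" using phi(2) v by blast
      moreover have "w \<in> V" using phi(1) v unfolding automorphism_def bij_betw_def by blast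
      moreover have "big V E w" using auto_big[OF phi(1) v(2) EV] v by blast
      ultimately show "w \<in> insert e2 C \<inter> Bg" unfolding Bg_def by blast
    qed
  next
    show "insert e2 C \<inter> Bg \<subseteq> \<phi> ` (insert e1 C \<inter> Bg)"
    proof
      fix w assume w: "w \<in> insert e2 C \<inter> Bg"
      then obtain v where v: "v \<in> insert e1 C" "w = \<phi> v" using phi(2) by blast
      have vV: "v \<in> V" using A1V v by blast
      have "big V E v" using auto_big[OF phi(1) vV EV] v w unfolding Bg_def by blast
      then show "w \<in> \<phi> ` (insert e1 C \<inter> Bg)" using v vV unfolding Bg_def by blast
    qed
  qed
  have "card (insert e1 C \<inter> Bg) = card (insert e2 C \<inter> Bg)"
    using card_image[OF inj_on_subset[OF inj]] img A1V by (metis Int_lower1 order_trans)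
  moreover have "e1 \<noteq> e2" using b1 b2 by blast
  moreover have "e1 \<in> Bg" using b1 A1V unfolding Bg_def by blast
  moreover have "e2 \<notin> Bg" using b2 unfolding Bg_def by blast
  moreover have "e1 \<notin> C"
  proof -
    have "W \<noteq> []" using cover_ne[OF c W] .
    then have "e1 \<in> set W" using e1 by auto
    then show ?thesis unfolding C_def using cover_disj[OF c _ W] cover_ne[OF c] hd_in_set by blast
  qed
  moreover have "finite C" unfolding C_def using f by simp
  ultimately show False by simp
qed

lemma exchange:
  assumes sg: "simple_graph V E" and nc: "\<not> has_cycle V E" and iso: "iso_unique_zf V E"
    and m: "min_path_cover V E Q" and W: "W \<in> Q"
  shows "big V E (hd W) \<longleftrightarrow> big V E (last W)"
  using exchange_dir[OF sg nc iso m W] by blast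



lemma M_aux:
  assumes sg: "simple_graph V E" and nc: "\<not> has_cycle V E" and iso: "iso_unique_zf V E"
  shows "card V - length W = n \<Longrightarrow> min_path_cover V E Q \<Longrightarrow> W \<in> Q \<Longrightarrow> big V E (hd W) \<Longrightarrow> False"
proof (induction n arbitrary: Q W rule: less_induct)
  case (less n)
  note m = less.prems(2) and W = less.prems(3)
  have c: "path_cover V E Q" and f: "finite Q" using m unfolding min_path_cover_def by auto
  have irr: "\<And>a. \<not> E a a" using sg unfolding simple_graph_def by blast
  have sym: "\<And>a b. E a b \<Longrightarrow> E b a" using sg unfolding simple_graph_def by blast
  have EV: "\<And>a b. E a b \<Longrightarrow> a \<in> V \<and> b \<in> V" using sg unfolding simple_graph_def by blast
  have fV: "finite V" using sg unfolding simple_graph_def by blast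
  have bl: "big V E (last W)" using exchange[OF sg nc iso m W] less.prems(4) by blast
  have pW: "is_path V E W" using cover_path[OF c W] .
  have Wne: "W \<noteq> []" using cover_ne[OF c W] .
  define L where "L = length W"
  have L0: "0 < L" using Wne unfolding L_def by simp
  have eq: "last W = W ! (L - 1)" using Wne unfolding L_def by (simp add: last_conv_nth)
  have nb: "\<exists>i. Suc i = L - 1 \<and> z = W ! i" if z: "z \<in> set W" "E (last W) z" for z
  proof -
    obtain i where i: "i < L" "z = W ! i" using z(1) unfolding L_def by (metis in_set_conv_nth)
    have "i \<noteq> L - 1" using irr z(2) eq i by metis
    then have "i < L - 1" using i by simp
    then have "L - 1 = Suc i" using path_nbr[OF nc pW, of i "L - 1"] z(2) eq i L0 unfolding L_def by simp
    then show ?thesis using i by auto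
  qed
  obtain a b where ab: "a \<noteq> b" "a \<in> V" "b \<in> V" "E (last W) a" "E (last W) b"
    using bl unfolding big_def by blast
  obtain z where z: "z \<in> V" "z \<notin> set W" "E (last W) z"
  proof (cases "a \<in> set W \<and> b \<in> set W")
    case True
    obtain i where i: "Suc i = L - 1" "a = W ! i" using nb True ab by blast
    obtain i' where i': "Suc i' = L - 1" "b = W ! i'" using nb True ab by blast
    have "i = i'" using i(1) i'(1) by simp
    then have "a = b" using i(2) i'(2) by simp
    then show ?thesis using ab(1) by simp
  next
    case False
    then show ?thesis using that ab by blast
  qed
  obtain Rz where Rz: "Rz \<in> Q" "z \<in> set Rz" using cover_in[OF c z(1)] by blast
  have RzW: "Rz \<noteq> W" using Rz z by blast
  obtain j where j: "j < length Rz" "Rz ! j = z" using Rz(2) by (metis in_set_conv_nth)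
  show False
  proof (cases "j = 0")
    case True
    have "Rz \<noteq> []" using cover_ne[OF c Rz(1)] .
    then have "hd Rz = z" using j True by (simp add: hd_conv_nth)
    then show False using join_contra[OF m W Rz(1) RzW[symmetric]] z(3) by simp
  next
    case False
    then have j0: "0 < j" by simp
    obtain Q' where Q': "min_path_cover V E Q'" "W @ drop j Rz \<in> Q'"
      using split_join_A[OF m Rz(1) j0 j(1) W RzW[symmetric]] z(3) j(2) by blast
    define W' where "W' = W @ drop j Rz"
    have hW': "hd W' = hd W" unfolding W'_def using Wne by simp
    have lW': "length W' > L" unfolding W'_def L_def using j by simp
    have "is_path V E W'" using cover_path Q' unfolding W'_def min_path_cover_def by blast
    then have "distinct W'" "set W' \<subseteq> V" unfolding is_path_def is_walk_def by auto
    then have "length W' \<le> card V" using fV by (metis card_mono distinct_card)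
    then have lt: "card V - length W' < n" using lW' less.prems(1) unfolding L_def by simp
    have bW': "big V E (hd W')" using hW' less.prems(4) by simp
    have W'Q: "W' \<in> Q'" using Q'(2) unfolding W'_def .
    show False using less.IH[OF lt refl Q'(1) W'Q bW'] .
  qed
qed

lemma M_ends:
  assumes sg: "simple_graph V E" and nc: "\<not> has_cycle V E" and iso: "iso_unique_zf V E"
    and m: "min_path_cover V E Q" and W: "W \<in> Q"
  shows "\<not> big V E (hd W)" "\<not> big V E (last W)"
  using M_aux[OF sg nc iso refl m W] exchange[OF sg nc iso m W] by blast+



theorem lemma3p8:
  fixes V :: "'a set" and E :: "'a \<Rightarrow> 'a \<Rightarrow> bool" and \<P> :: "'a list set" and x :: 'a
  assumes "is_tree V E"
    and "iso_unique_zf V E"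
    and "card V \<ge> 2"
    and "min_path_cover V E \<P>"
    and "[x] \<in> \<P>"
  shows "\<exists>y. {w \<in> V. E x w} = {y} \<and> (\<exists>R\<in>\<P>. length R = 3 \<and> R ! 1 = y)"
proof -
  have sg: "simple_graph V E" and conn: "connected_graph V E" and nc: "\<not> has_cycle V E"
    using assms(1) unfolding is_tree_def by auto
  note iso = assms(2) and m = assms(4) and X = assms(5)
  have irr: "\<And>a. \<not> E a a" using sg unfolding simple_graph_def by blast
  have sym: "\<And>a b. E a b \<Longrightarrow> E b a" using sg unfolding simple_graph_def by blast
  have EV: "\<And>a b. E a b \<Longrightarrow> a \<in> V \<and> b \<in> V" using sg unfolding simple_graph_def by blast
  have fV: "finite V" using sg unfolding simple_graph_def by blast
  have c: "path_cover V E \<P>" using m unfolding min_path_cover_def by blast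
  have xV: "x \<in> V" using cover_sub[OF c X] by simp
  have "\<exists>v\<in>V. v \<noteq> x"
  proof (rule ccontr)
    assume "\<not> (\<exists>v\<in>V. v \<noteq> x)"
    then have "V \<subseteq> {x}" by blast
    then have "card V \<le> card {x}" by (intro card_mono) simp_all
    then show False using assms(3) by simp
  qed
  then obtain v where v: "v \<in> V" "v \<noteq> x" by blast
  obtain p where p: "is_walk V E p" "hd p = x" "last p = v" using conn xV v(1) unfolding connected_graph_def by blast
  have pne: "p \<noteq> []" using p unfolding is_walk_def by blast
  have "length p \<noteq> 1"
  proof
    assume "length p = 1"
    then obtain a where "p = [a]" by (metis One_nat_def length_0_conv length_Suc_conv)
    then show False using p v by simp
  qed
  then have lp: "Suc 0 < length p" using pne by (cases p) auto
  define y where "y = p ! 1"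
  have "E (p ! 0) (p ! Suc 0)" using p(1) lp unfolding is_walk_def by blast
  then have xy: "E x y" using p(2) pne unfolding y_def by (simp add: hd_conv_nth)
  have yV: "y \<in> V" using EV xy by blast
  have nbx: "\<not> big V E x" using M_ends(1)[OF sg nc iso m X] by simp
  have nbrs: "{w \<in> V. E x w} = {y}"
  proof
    show "{w \<in> V. E x w} \<subseteq> {y}"
    proof
      fix w assume w: "w \<in> {w \<in> V. E x w}"
      show "w \<in> {y}"
      proof (rule ccontr)
        assume "w \<notin> {y}"
        then have "big V E x" unfolding big_def using w xy yV by blast
        then show False using nbx by simp
      qed
    qed
    show "{y} \<subseteq> {w \<in> V. E x w}" using xy yV by blast
  qed
  obtain R where R: "R \<in> \<P>" "y \<in> set R" using cover_in[OF c yV] by blast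
  obtain j where j: "j < length R" "R ! j = y" using R(2) by (metis in_set_conv_nth)
  have Rx: "R \<noteq> [x]" using R(2) xy irr by auto
  have pR: "is_path V E R" using cover_path[OF c R(1)] .
  have dR: "distinct R" using pR unfolding is_path_def by blast
  have edge: "E (R ! k) (R ! Suc k)" if "Suc k < length R" for k
    using pR that unfolding is_path_def is_walk_def by blast
  have inV: "R ! k \<in> V" if "k < length R" for k using pR that walk_nth_V unfolding is_path_def by blast
  have Rne: "R \<noteq> []" using cover_ne[OF c R(1)] .
  have j0: "j \<noteq> 0"
  proof
    assume "j = 0"
    then have "hd R = y" using j Rne by (simp add: hd_conv_nth)
    then show False using join_contra[OF m X R(1) Rx[symmetric]] xy by simp
  qed
  have jl: "j \<noteq> length R - 1"
  proof
    assume "j = length R - 1"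
    then have "last R = y" using j Rne by (simp add: last_conv_nth)
    then show False using join_contra[OF m R(1) X Rx] sym[OF xy] by simp
  qed
  have j1: "j = 1"
  proof (rule ccontr)
    assume "j \<noteq> 1"
    then have j2: "2 \<le> j" using j0 by simp
    obtain Q' where Q': "min_path_cover V E Q'" "[x] @ drop j R \<in> Q'" "take j R \<in> Q'"
      using split_join_A[OF m R(1) _ j(1) X Rx[symmetric]] j0 xy j(2) by auto
    have nb: "\<not> big V E (last (take j R))" using M_ends(2)[OF sg nc iso Q'(1) Q'(3)] .
    have tne: "take j R \<noteq> []" using j0 Rne by simp
    have "last (take j R) = R ! (j - 1)" using last_conv_nth[OF tne] j j0 by simp
    moreover have "big V E (R ! (j - 1))"
    proof -
      have s1: "Suc (j - 2) = j - 1" "Suc (j - 1) = j" using j2 by auto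
      have e1: "E (R ! (j - 1)) (R ! (j - 2))" using edge[of "j - 2"] s1 j sym by simp
      have e2: "E (R ! (j - 1)) (R ! j)" using edge[of "j - 1"] s1 j by simp
      have "R ! (j - 2) \<noteq> R ! j" using nth_eq_iff_index_eq[OF dR, of "j - 2" j] j(1) j2 by simp
      then show ?thesis unfolding big_def using e1 e2 EV by blast
    qed
    ultimately show False using nb by simp
  qed
  have len3: "length R = 3"
  proof (rule ccontr)
    assume "length R \<noteq> 3"
    then have l4: "j + 2 < length R" using j j1 jl by simp
    obtain Q' where Q': "min_path_cover V E Q'" "take (j + 1) R @ [x] \<in> Q'" "drop (j + 1) R \<in> Q'"
      using split_join_B[OF m R(1) _ _ X Rx[symmetric], of "j + 1"] l4 j(2) sym[OF xy] by auto
    have nb: "\<not> big V E (hd (drop (j + 1) R))" using M_ends(1)[OF sg nc iso Q'(1) Q'(3)] .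
    have "hd (drop (j + 1) R) = R ! (j + 1)" using hd_drop_conv_nth[of "j + 1" R] l4 by simp
    moreover have "big V E (R ! (j + 1))"
    proof -
      have e1: "E (R ! (j + 1)) (R ! j)" using edge[of j] l4 sym by simp
      have e2: "E (R ! (j + 1)) (R ! (j + 2))" using edge[of "j + 1"] l4 by simp
      have "R ! j \<noteq> R ! (j + 2)" using nth_eq_iff_index_eq[OF dR, of j "j + 2"] l4 by simp
      then show ?thesis unfolding big_def using e1 e2 EV by blast
    qed
    ultimately show False using nb by simp
  qed
  show ?thesis using nbrs R(1) len3 j j1 by blast
qed

end
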